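(* Let $D$ be a directed acyclic graph with exactly one source $\rho$, and let $e$ be the eccentricity of $\rho$. Then for every $i\in\{1,\ldots,e\}$ there is a node of $D$ with eccentricity $i$.
   Context: The eccentricity of a node $v$ of a digraph is the maximum, over all nodes $w$ reachable from $v$ by a directed path, of the directed distance from $v$ to $w$ (only reachable nodes are considered, so it is always finite). *)

theory Defs
  imports Main
begin

text \<open>Directed walks of length n from v to w are
  exactly the pairs (v,w) in E^^n; a shortest walk is a directed path.\<close>

definition digraph :: "'a set \<Rightarrow> ('a \<times> 'a) set \<Rightarrow> bool" where
  "digraph V E \<longleftrightarrow> finite V \<and> E \<subseteq> V \<times> V"

definition dag :: "'a set \<Rightarrow> ('a \<times> 'a) set \<Rightarrow> bool" where
  "dag V E \<longleftrightarrow> digraph V E \<and> acyclic E"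

definition is_source :: "'a set \<Rightarrow> ('a \<times> 'a) set \<Rightarrow> 'a \<Rightarrow> bool" where
  "is_source V E v \<longleftrightarrow> v \<in> V \<and> (\<forall>u. (u, v) \<notin> E)"

text \<open>Directed distance: length of a shortest directed path (only used for reachable w).\<close>
definition ddist :: "('a \<times> 'a) set \<Rightarrow> 'a \<Rightarrow> 'a \<Rightarrow> nat" where
  "ddist E v w = (LEAST n. (v, w) \<in> E ^^ n)"

definition ecc :: "('a \<times> 'a) set \<Rightarrow> 'a \<Rightarrow> nat" where
  "ecc E v = Max {ddist E v w | w. (v, w) \<in> E\<^sup>*}"

end

theory Submission
  imports Defs
begin

lemma ddist_mem:
  assumes "(v, w) \<in> E\<^sup>*"
  shows "(v, w) \<in> E ^^ ddist E v w"
proof -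
  obtain n where "(v, w) \<in> E ^^ n" using assms rtrancl_power by blast
  then show ?thesis unfolding ddist_def by (rule LeastI)
qed

lemma ecc_set_finite:
  assumes "E \<subseteq> V \<times> V" "finite V"
  shows "finite {ddist E v w | w. (v, w) \<in> E\<^sup>*}"
proof -
  have "{w. (v, w) \<in> E\<^sup>*} \<subseteq> insert v V"
  proof
    fix w assume "w \<in> {w. (v, w) \<in> E\<^sup>*}"
    then have "(v, w) \<in> E\<^sup>*" by simp
    then show "w \<in> insert v V"
      by (cases rule: rtrancl.cases) (use assms in auto)
  qed
  then have "finite {w. (v, w) \<in> E\<^sup>*}" using assms finite_subset by blast
  then have "finite ((\<lambda>w. ddist E v w) ` {w. (v, w) \<in> E\<^sup>*})" by simp
  moreover have "{ddist E v w | w. (v, w) \<in> E\<^sup>*} = (\<lambda>w. ddist E v w) ` {w. (v, w) \<in> E\<^sup>*}"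
    by auto
  ultimately show ?thesis by simp
qed

lemma ecc_ge:
  assumes "E \<subseteq> V \<times> V" "finite V" "(v, w) \<in> E\<^sup>*"
  shows "ddist E v w \<le> ecc E v"
  unfolding ecc_def using ecc_set_finite[OF assms(1,2)] assms(3)
  by (intro Max_ge) auto

lemma ecc_attained:
  assumes "E \<subseteq> V \<times> V" "finite V"
  shows "\<exists>w. (v, w) \<in> E\<^sup>* \<and> ddist E v w = ecc E v"
proof -
  have ne: "{ddist E v w | w. (v, w) \<in> E\<^sup>*} \<noteq> {}" by blast
  have "ecc E v \<in> {ddist E v w | w. (v, w) \<in> E\<^sup>*}"
    unfolding ecc_def using Max_in[OF ecc_set_finite[OF assms] ne] .
  then show ?thesis by auto
qed

lemma ecc_step:
  assumes "E \<subseteq> V \<times> V" "finite V" "ecc E u = Suc m"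
  shows "\<exists>v. (u, v) \<in> E \<and> m \<le> ecc E v"
proof -
  obtain w where w: "(u, w) \<in> E\<^sup>*" "ddist E u w = Suc m"
    using ecc_attained[OF assms(1,2)] assms(3) by metis
  have "(u, w) \<in> E ^^ Suc m" using ddist_mem[OF w(1)] w(2) by simp
  then obtain v where v: "(u, v) \<in> E" "(v, w) \<in> E ^^ m"
    using relpow_Suc_D2 by metis
  have vw: "(v, w) \<in> E\<^sup>*" using v(2) relpow_imp_rtrancl by blast
  have "m \<le> ddist E v w"
  proof (rule ccontr)
    assume "\<not> m \<le> ddist E v w"
    then have lt: "ddist E v w < m" by simp
    have "(u, w) \<in> E ^^ Suc (ddist E v w)"
      using ddist_mem[OF vw] v(1) relpow_Suc_I2 by metis
    then have "ddist E u w \<le> Suc (ddist E v w)"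
      unfolding ddist_def by (rule Least_le)
    then show False using lt w(2) by simp
  qed
  also have "\<dots> \<le> ecc E v" using ecc_ge[OF assms(1,2) vw] .
  finally show ?thesis using v(1) by blast
qed

theorem mainTheorem4:
  fixes V :: "'a set" and E :: "('a \<times> 'a) set" and \<rho> :: 'a
  assumes "dag V E"
    and "is_source V E \<rho>"
    and "\<forall>v. is_source V E v \<longrightarrow> v = \<rho>"
  shows "\<forall>i \<in> {1..ecc E \<rho>}. \<exists>v \<in> V. ecc E v = i"
proof
  fix i assume i: "i \<in> {1..ecc E \<rho>}"
  have EV: "E \<subseteq> V \<times> V" and fV: "finite V" and ac: "acyclic E"
    using assms(1) unfolding dag_def digraph_def by auto
  have fE: "finite E" using EV fV finite_subset by blast
  have wf: "wf (E\<inverse>)" using finite_acyclic_wf_converse[OF fE ac] .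
  let ?S = "{u \<in> V. i \<le> ecc E u}"
  have "\<rho> \<in> ?S" using i assms(2) unfolding is_source_def by auto
  then obtain u where u: "u \<in> ?S" and min: "\<And>y. (y, u) \<in> E\<inverse> \<Longrightarrow> y \<notin> ?S"
    using wfE_min[OF wf \<open>\<rho> \<in> ?S\<close>] by blast
  have "ecc E u \<noteq> 0" using u i by auto
  then obtain m where m: "ecc E u = Suc m" using not0_implies_Suc by blast
  obtain v where v: "(u, v) \<in> E" "m \<le> ecc E v" using ecc_step[OF EV fV m] by blast
  have "v \<in> V" using v(1) EV by auto
  then have "ecc E v < i" using min[of v] v(1) by auto
  then have "ecc E u = i" using m v(2) u by auto
  then show "\<exists>v \<in> V. ecc E v = i" using u by blast
qed

end
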